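(* Impose (A1)–(A6), one of the support cases (A7.1), (A7.2), (A7.3)(a), (A7.3)(b), and (A8''). Fix $x\in\mathcal X$, $u\in[0,1]$, and let $\underline\Delta,\overline\Delta$ and $\underline\Lambda,\overline\Lambda$ be the functions defined in the context for that support case. Then $$\min\{\underline\Delta(x,u),\underline\Lambda(x,u)\}\le\Delta^{OO}_{Y^*}(x,u)\le\max\{\overline\Delta(x,u),\overline\Lambda(x,u)\}.$$
   Context: Standing setup. On a common probability space: $X$ (covariates, support $\mathcal X$), $Z$ (instrument, support $\mathcal Z$), $W=(X,Z)$; latent real random variables $U,V$, jointly continuously distributed conditional on $X$, with $U\mid X$ and $V\mid X$ each Uniform$[0,1]$ (their joint dependence unrestricted); real potential outcomes of interest $Y_0^*,Y_1^*$. Given functions $P:\mathcal X\times\mathcal Z\to[0,1]$ and $Q:\{0,1\}\times\mathcal X\to[0,1]$, define the treatment $D=\mathbf 1\{P(W)\ge U\}$, potential selection indicators $S_d=\mathbf 1\{Q(d,X)\ge V\}$ ($d\in\{0,1\}$), selection indicator $S=DS_1+(1-D)S_0$, potential observable outcomes $Y_d=S_dY_d^*$ and observable outcome $Y=DY_1+(1-D)Y_0$. For $x\in\mathcal X$, $u\in[0,1]$, $d\in\{0,1\}$: $m_d^Y(x,u)=\mathbb E[Y_d\mid X=x,U=u]$, $m_d^S(x,u)=\mathbb E[S_d\mid X=x,U=u]$, $\Delta_S(x,u)=m_1^S(x,u)-m_0^S(x,u)$, and $\Delta^{OO}_{Y^*}(x,u)=\mathbb E[Y_1^*-Y_0^*\mid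 X=x,U=u,S_0=1,S_1=1]$. Ratios appearing are assumed well defined. Assumptions: (A1) $Z$ is independent of $(U,V,Y_0^*,Y_1^* )$ conditional on $X$; (A2) the distribution of $P(W)$ given $X$ is nondegenerate; (A3) $\mathbb E|Y_d^*|<\infty$ and $\mathbb E[(Y_d^* )^2]<\infty$; (A4) $0<\mathbb P[D=1\mid X]<1$; (A5) $X$ is invariant to counterfactual manipulation of treatment; (A6) $Y_0^*,Y_1^*$ have a common support $\mathcal Y^*\subseteq\mathbb R$; $\underline y^*=\inf\mathcal Y^*$, $\overline y^*=\sup\mathcal Y^*$ (possibly infinite), known. Support cases: (A7.1) $\underline y^*>-\infty$, $\overline y^*=+\infty$, $\mathcal Y^*$ an interval; (A7.2) $\underline y^*=-\infty$, $\overline y^*<\infty$, $\mathcal Y^*$ an interval; (A7.3) both finite and either (a) $\mathcal Y^*$ an interval or (b) $\underline y^*,\overline y^*\in\mathcal Y^*$. (A8'') (monotone selection, unknown direction) either $Q(1,x)>Q(0,x)>0$ for all $x\in\mathcal X$, or $Q(0,x)>Q(1,x)>0$ for all $x\in\mathcal X$. Functions (at $(x,u)$): under (A7.1), $\underline\Delta=\underline y^*-\frac{m_0^Y}{m_0^S}$, $\overline\Delta=\frac{m_1^Y-\underline y^*\Delta_S}{m_0^S}-\frac{m_0^Y}{m_0^S}$, $\underline\Lambda=\frac{m_1^Y}{m_1^S}-\frac{m_0^Y-\underline y^*(-\Delta_S)}{m_1^S}$, $\overline\Lambda=\frac{m_1^Y}{m_1^S}-\underline y^*$; under (A7.2), $\underline\Delta=\frac{m_1^Y-\overline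 y^*\Delta_S}{m_0^S}-\frac{m_0^Y}{m_0^S}$, $\overline\Delta=\overline y^*-\frac{m_0^Y}{m_0^S}$, $\underline\Lambda=\frac{m_1^Y}{m_1^S}-\overline y^*$, $\overline\Lambda=\frac{m_1^Y}{m_1^S}-\frac{m_0^Y-\overline y^*(-\Delta_S)}{m_1^S}$; under (A7.3), $\underline\Delta=\max\{\frac{m_1^Y-\overline y^*\Delta_S}{m_0^S},\underline y^*\}-\frac{m_0^Y}{m_0^S}$, $\overline\Delta=\min\{\frac{m_1^Y-\underline y^*\Delta_S}{m_0^S},\overline y^*\}-\frac{m_0^Y}{m_0^S}$, $\underline\Lambda=\frac{m_1^Y}{m_1^S}-\min\{\frac{m_0^Y-\underline y^*(-\Delta_S)}{m_1^S},\overline y^*\}$, $\overline\Lambda=\frac{m_1^Y}{m_1^S}-\max\{\frac{m_0^Y-\overline y^*(-\Delta_S)}{m_1^S},\underline y^*\}$. *)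

theory Defs
  imports "HOL-Probability.Probability"
begin

text \<open>The conditional law given X = x, U = u is represented by a
 kernel K :: 'x => real => 'a measure on the common sample space (a regular
 conditional distribution of the sample point given (X,U)).
 The treatment index d in {0,1} is a nat.\<close>

definition Ssel :: "(nat \<Rightarrow> 'x \<Rightarrow> real) \<Rightarrow> ('a \<Rightarrow> real) \<Rightarrow> nat \<Rightarrow> 'x \<Rightarrow> 'a \<Rightarrow> real" where
  "Ssel Q V d x \<omega> = (if Q d x \<ge> V \<omega> then 1 else 0)"

definition mY :: "('x \<Rightarrow> real \<Rightarrow> 'a measure) \<Rightarrow> (nat \<Rightarrow> 'x \<Rightarrow> real) \<Rightarrow> ('a \<Rightarrow> real)
   \<Rightarrow> (nat \<Rightarrow> 'a \<Rightarrow> real) \<Rightarrow> nat \<Rightarrow> 'x \<Rightarrow> real \<Rightarrow> real" where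
  "mY K Q V Ys d x u = (\<integral>\<omega>. Ssel Q V d x \<omega> * Ys d \<omega> \<partial>(K x u))"

definition mS :: "('x \<Rightarrow> real \<Rightarrow> 'a measure) \<Rightarrow> (nat \<Rightarrow> 'x \<Rightarrow> real) \<Rightarrow> ('a \<Rightarrow> real)
   \<Rightarrow> nat \<Rightarrow> 'x \<Rightarrow> real \<Rightarrow> real" where
  "mS K Q V d x u = (\<integral>\<omega>. Ssel Q V d x \<omega> \<partial>(K x u))"

definition DeltaS :: "('x \<Rightarrow> real \<Rightarrow> 'a measure) \<Rightarrow> (nat \<Rightarrow> 'x \<Rightarrow> real) \<Rightarrow> ('a \<Rightarrow> real)
   \<Rightarrow> 'x \<Rightarrow> real \<Rightarrow> real" where
  "DeltaS K Q V x u = mS K Q V 1 x u - mS K Q V 0 x u"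

definition DeltaOO :: "('x \<Rightarrow> real \<Rightarrow> 'a measure) \<Rightarrow> (nat \<Rightarrow> 'x \<Rightarrow> real) \<Rightarrow> ('a \<Rightarrow> real)
   \<Rightarrow> (nat \<Rightarrow> 'a \<Rightarrow> real) \<Rightarrow> 'x \<Rightarrow> real \<Rightarrow> real" where
  "DeltaOO K Q V Ys x u =
     (\<integral>\<omega>. Ssel Q V 0 x \<omega> * Ssel Q V 1 x \<omega> * (Ys 1 \<omega> - Ys 0 \<omega>) \<partial>(K x u))
     / (\<integral>\<omega>. Ssel Q V 0 x \<omega> * Ssel Q V 1 x \<omega> \<partial>(K x u))"

text \<open>Support cases (A7.1), (A7.2), (A7.3)(a), (A7.3)(b) for the common support Ysupp,
 with underline y^* = Inf Ysupp, overline y^* = Sup Ysupp.\<close>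
datatype supp_case = A71 | A72 | A73a | A73b

fun supp_case_holds :: "supp_case \<Rightarrow> real set \<Rightarrow> bool" where
  "supp_case_holds A71 Y = (bdd_below Y \<and> \<not> bdd_above Y \<and> is_interval Y)"
| "supp_case_holds A72 Y = (\<not> bdd_below Y \<and> bdd_above Y \<and> is_interval Y)"
| "supp_case_holds A73a Y = (bdd_below Y \<and> bdd_above Y \<and> is_interval Y)"
| "supp_case_holds A73b Y = (bdd_below Y \<and> bdd_above Y \<and> Inf Y \<in> Y \<and> Sup Y \<in> Y)"

text \<open>Bound functions, as functions of (m_1^Y, m_0^Y, m_1^S, m_0^S) and the support,
 with Delta_S = m_1^S - m_0^S.\<close>
fun Dlo :: "supp_case \<Rightarrow> real set \<Rightarrow> real \<Rightarrow> real \<Rightarrow> real \<Rightarrow> real \<Rightarrow> real" where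
  "Dlo A71 Y m1Y m0Y m1S m0S = Inf Y - m0Y / m0S"
| "Dlo A72 Y m1Y m0Y m1S m0S = (m1Y - Sup Y * (m1S - m0S)) / m0S - m0Y / m0S"
| "Dlo A73a Y m1Y m0Y m1S m0S = max ((m1Y - Sup Y * (m1S - m0S)) / m0S) (Inf Y) - m0Y / m0S"
| "Dlo A73b Y m1Y m0Y m1S m0S = max ((m1Y - Sup Y * (m1S - m0S)) / m0S) (Inf Y) - m0Y / m0S"

fun Dhi :: "supp_case \<Rightarrow> real set \<Rightarrow> real \<Rightarrow> real \<Rightarrow> real \<Rightarrow> real \<Rightarrow> real" where
  "Dhi A71 Y m1Y m0Y m1S m0S = (m1Y - Inf Y * (m1S - m0S)) / m0S - m0Y / m0S"
| "Dhi A72 Y m1Y m0Y m1S m0S = Sup Y - m0Y / m0S"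
| "Dhi A73a Y m1Y m0Y m1S m0S = min ((m1Y - Inf Y * (m1S - m0S)) / m0S) (Sup Y) - m0Y / m0S"
| "Dhi A73b Y m1Y m0Y m1S m0S = min ((m1Y - Inf Y * (m1S - m0S)) / m0S) (Sup Y) - m0Y / m0S"

fun Llo :: "supp_case \<Rightarrow> real set \<Rightarrow> real \<Rightarrow> real \<Rightarrow> real \<Rightarrow> real \<Rightarrow> real" where
  "Llo A71 Y m1Y m0Y m1S m0S = m1Y / m1S - (m0Y - Inf Y * (- (m1S - m0S))) / m1S"
| "Llo A72 Y m1Y m0Y m1S m0S = m1Y / m1S - Sup Y"
| "Llo A73a Y m1Y m0Y m1S m0S = m1Y / m1S - min ((m0Y - Inf Y * (- (m1S - m0S))) / m1S) (Sup Y)"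
| "Llo A73b Y m1Y m0Y m1S m0S = m1Y / m1S - min ((m0Y - Inf Y * (- (m1S - m0S))) / m1S) (Sup Y)"

fun Lhi :: "supp_case \<Rightarrow> real set \<Rightarrow> real \<Rightarrow> real \<Rightarrow> real \<Rightarrow> real \<Rightarrow> real" where
  "Lhi A71 Y m1Y m0Y m1S m0S = m1Y / m1S - Inf Y"
| "Lhi A72 Y m1Y m0Y m1S m0S = m1Y / m1S - (m0Y - Sup Y * (- (m1S - m0S))) / m1S"
| "Lhi A73a Y m1Y m0Y m1S m0S = m1Y / m1S - max ((m0Y - Sup Y * (- (m1S - m0S))) / m1S) (Inf Y)"
| "Lhi A73b Y m1Y m0Y m1S m0S = m1Y / m1S - max ((m0Y - Sup Y * (- (m1S - m0S))) / m1S) (Inf Y)"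

definition cond_kernel :: "'a measure \<Rightarrow> 'x measure \<Rightarrow> ('a \<Rightarrow> 'x) \<Rightarrow> ('a \<Rightarrow> real)
   \<Rightarrow> ('x \<Rightarrow> real \<Rightarrow> 'a measure) \<Rightarrow> bool" where
  "cond_kernel M MX X U K \<longleftrightarrow>
     (\<forall>x u. prob_space (K x u) \<and> sets (K x u) = sets M) \<and>
     (\<forall>A\<in>sets M. (\<lambda>(x, u). measure (K x u) A) \<in> borel_measurable (MX \<Otimes>\<^sub>M borel) \<and>
        (\<forall>B\<in>sets (MX \<Otimes>\<^sub>M borel).
           measure M (A \<inter> {\<omega>\<in>space M. (X \<omega>, U \<omega>) \<in> B})
           = (\<integral>\<omega>. indicator B (X \<omega>, U \<omega>) * measure (K (X \<omega>) (U \<omega>)) A \<partial>M)))"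

end

theory Submission
  imports Defs
begin

lemma bnd:
  fixes N :: "'a measure" and A B :: "'a set" and Y :: "'a \<Rightarrow> real"
  assumes N: "prob_space N" and AB: "A \<in> sets N" "B \<in> sets N" "A \<subseteq> B"
    and Y: "integrable N Y" and S: "AE \<omega> in N. Y \<omega> \<in> S"
  shows "bdd_below S \<Longrightarrow> Inf S * (measure N B - measure N A) \<le> (\<integral>\<omega>. indicator B \<omega> * Y \<omega> \<partial>N) - (\<integral>\<omega>. indicator A \<omega> * Y \<omega> \<partial>N)"
    and "bdd_below S \<Longrightarrow> Inf S * measure N A \<le> (\<integral>\<omega>. indicator A \<omega> * Y \<omega> \<partial>N)"
    and "bdd_above S \<Longrightarrow> (\<integral>\<omega>. indicator B \<omega> * Y \<omega> \<partial>N) - (\<integral>\<omega>. indicator A \<omega> * Y \<omega> \<partial>N) \<le> Sup S * (measure N B - measure N A)"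
    and "bdd_above S \<Longrightarrow> (\<integral>\<omega>. indicator A \<omega> * Y \<omega> \<partial>N) \<le> Sup S * measure N A"
proof -
  interpret prob_space N by fact
  have iA: "integrable N (\<lambda>\<omega>. indicator A \<omega> * Y \<omega>)"
    using integrable_mult_indicator[OF AB(1) Y] by simp
  have iB: "integrable N (\<lambda>\<omega>. indicator B \<omega> * Y \<omega>)"
    using integrable_mult_indicator[OF AB(2) Y] by simp
  have dif: "(\<integral>\<omega>. indicator B \<omega> * Y \<omega> \<partial>N) - (\<integral>\<omega>. indicator A \<omega> * Y \<omega> \<partial>N)
     = (\<integral>\<omega>. (indicator B \<omega> - indicator A \<omega>) * Y \<omega> \<partial>N)"
    using iA iB by (simp add: left_diff_distrib)
  have ind: "(indicator B \<omega> - indicator A \<omega> :: real) \<ge> 0" for \<omega>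
    using AB(3) by (auto simp: indicator_def)
  have idA: "integrable N (\<lambda>\<omega>. indicator A \<omega> :: real)"
    using integrable_real_indicator[OF AB(1)] emeasure_finite[of A] by (simp add: less_top[symmetric])
  have idB: "integrable N (\<lambda>\<omega>. indicator B \<omega> :: real)"
    using integrable_real_indicator[OF AB(2)] emeasure_finite[of B] by (simp add: less_top[symmetric])
  have sAB[simp]: "A \<inter> space N = A" "B \<inter> space N = B"
    using AB(1,2) sets.sets_into_space by blast+
  have idD: "integrable N (\<lambda>\<omega>. c * (indicator B \<omega> - indicator A \<omega>) :: real)" for c
    using idA idB by auto
  have idD2: "integrable N (\<lambda>\<omega>. (indicator B \<omega> - indicator A \<omega>) * Y \<omega>)"
    using iA iB by (simp add: left_diff_distrib)
  have cD: "c * (measure N B - measure N A) = (\<integral>\<omega>. c * (indicator B \<omega> - indicator A \<omega>) \<partial>N)" for c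
    using idA idB by simp
  have cA: "c * measure N A = (\<integral>\<omega>. c * indicator A \<omega> \<partial>N)" for c by simp
  have ptl: "Inf S * (indicator B \<omega> - indicator A \<omega>) \<le> (indicator B \<omega> - indicator A \<omega>) * Y \<omega>"
    if "Inf S \<le> Y \<omega>" for \<omega>
    using mult_left_mono[OF that ind[of \<omega>]] by (simp add: mult.commute)
  have ptu: "(indicator B \<omega> - indicator A \<omega>) * Y \<omega> \<le> Sup S * (indicator B \<omega> - indicator A \<omega>)"
    if "Y \<omega> \<le> Sup S" for \<omega>
    using mult_left_mono[OF that ind[of \<omega>]] by (simp add: mult.commute)
  have pal: "c * indicator A \<omega> \<le> indicator A \<omega> * Y \<omega>" if "c \<le> Y \<omega>" for c \<omega>
    using that by (simp add: indicator_def)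
  have pau: "indicator A \<omega> * Y \<omega> \<le> c * indicator A \<omega>" if "Y \<omega> \<le> c" for c \<omega>
    using that by (simp add: indicator_def)
  show "bdd_below S \<Longrightarrow> Inf S * (measure N B - measure N A) \<le> (\<integral>\<omega>. indicator B \<omega> * Y \<omega> \<partial>N) - (\<integral>\<omega>. indicator A \<omega> * Y \<omega> \<partial>N)"
  proof -
    assume bb: "bdd_below S"
    have "AE \<omega> in N. Inf S * (indicator B \<omega> - indicator A \<omega>) \<le> (indicator B \<omega> - indicator A \<omega>) * Y \<omega>"
      using S by eventually_elim (rule ptl, rule cInf_lower[OF _ bb])
    then show ?thesis unfolding dif cD by (rule integral_mono_AE[OF idD idD2])
  qed
  show "bdd_below S \<Longrightarrow> Inf S * measure N A \<le> (\<integral>\<omega>. indicator A \<omega> * Y \<omega> \<partial>N)"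
  proof -
    assume bb: "bdd_below S"
    have i: "integrable N (\<lambda>\<omega>. Inf S * indicator A \<omega>)" using idA by simp
    have "AE \<omega> in N. Inf S * indicator A \<omega> \<le> indicator A \<omega> * Y \<omega>"
      using S by eventually_elim (rule pal, rule cInf_lower[OF _ bb])
    then show ?thesis unfolding cA by (rule integral_mono_AE[OF i iA])
  qed
  show "bdd_above S \<Longrightarrow> (\<integral>\<omega>. indicator B \<omega> * Y \<omega> \<partial>N) - (\<integral>\<omega>. indicator A \<omega> * Y \<omega> \<partial>N) \<le> Sup S * (measure N B - measure N A)"
  proof -
    assume bb: "bdd_above S"
    have "AE \<omega> in N. (indicator B \<omega> - indicator A \<omega>) * Y \<omega> \<le> Sup S * (indicator B \<omega> - indicator A \<omega>)"
      using S by eventually_elim (rule ptu, rule cSup_upper[OF _ bb])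
    then show ?thesis unfolding dif cD by (rule integral_mono_AE[OF idD2 idD])
  qed
  show "bdd_above S \<Longrightarrow> (\<integral>\<omega>. indicator A \<omega> * Y \<omega> \<partial>N) \<le> Sup S * measure N A"
  proof -
    assume bb: "bdd_above S"
    have i: "integrable N (\<lambda>\<omega>. Sup S * indicator A \<omega>)" using idA by simp
    have "AE \<omega> in N. indicator A \<omega> * Y \<omega> \<le> Sup S * indicator A \<omega>"
      using S by eventually_elim (rule pau, rule cSup_upper[OF _ bb])
    then show ?thesis unfolding cA by (rule integral_mono_AE[OF iA i])
  qed
qed

theorem corollaryD1:
  fixes M :: "'a measure" and MX :: "'x measure"
    and X :: "'a \<Rightarrow> 'x" and U V :: "'a \<Rightarrow> real"
    and Ys :: "nat \<Rightarrow> 'a \<Rightarrow> real"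
    and Q :: "nat \<Rightarrow> 'x \<Rightarrow> real"
    and K :: "'x \<Rightarrow> real \<Rightarrow> 'a measure"
    and Xset :: "'x set" and Ysupp :: "real set"
    and c :: supp_case
    and x :: 'x and u :: real
  assumes M: "prob_space M"
    and X_meas: "X \<in> measurable M MX"
    and U_meas: "U \<in> borel_measurable M"
    and V_meas: "V \<in> borel_measurable M"
    and Ys_meas: "\<And>d. d \<in> {0, 1} \<Longrightarrow> Ys d \<in> borel_measurable M"
    and Q_range: "\<And>d x. d \<in> {0, 1} \<Longrightarrow> x \<in> Xset \<Longrightarrow> Q d x \<in> {0..1}"
    and X_supp: "\<forall>\<omega>\<in>space M. X \<omega> \<in> Xset"
    and K: "cond_kernel M MX X U K"
    and A3: "\<And>d. d \<in> {0, 1} \<Longrightarrow> integrable M (Ys d) \<and> integrable M (\<lambda>\<omega>. (Ys d \<omega>)\<^sup>2)"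
    and A3_cond: "\<And>d. d \<in> {0, 1} \<Longrightarrow> integrable (K x u) (Ys d)"
    and A6_ne: "Ysupp \<noteq> {}"
    and A6: "\<And>d. d \<in> {0, 1} \<Longrightarrow> AE \<omega> in M. Ys d \<omega> \<in> Ysupp"
    and A6_cond: "\<And>d. d \<in> {0, 1} \<Longrightarrow> AE \<omega> in K x u. Ys d \<omega> \<in> Ysupp"
    and A7: "supp_case_holds c Ysupp"
    and A8: "(\<forall>x\<in>Xset. Q 1 x > Q 0 x \<and> Q 0 x > 0) \<or> (\<forall>x\<in>Xset. Q 0 x > Q 1 x \<and> Q 1 x > 0)"
    and wd0: "mS K Q V 0 x u \<noteq> 0"
    and wd1: "mS K Q V 1 x u \<noteq> 0"
    and wdOO: "(\<integral>\<omega>. Ssel Q V 0 x \<omega> * Ssel Q V 1 x \<omega> \<partial>(K x u)) \<noteq> 0"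
    and x: "x \<in> Xset" and u: "u \<in> {0..1}"
  shows "min (Dlo c Ysupp (mY K Q V Ys 1 x u) (mY K Q V Ys 0 x u) (mS K Q V 1 x u) (mS K Q V 0 x u))
             (Llo c Ysupp (mY K Q V Ys 1 x u) (mY K Q V Ys 0 x u) (mS K Q V 1 x u) (mS K Q V 0 x u))
           \<le> DeltaOO K Q V Ys x u
         \<and> DeltaOO K Q V Ys x u
           \<le> max (Dhi c Ysupp (mY K Q V Ys 1 x u) (mY K Q V Ys 0 x u) (mS K Q V 1 x u) (mS K Q V 0 x u))
             (Lhi c Ysupp (mY K Q V Ys 1 x u) (mY K Q V Ys 0 x u) (mS K Q V 1 x u) (mS K Q V 0 x u))"
proof -
  define N where "N = K x u"
  have PN: "prob_space N" and sN: "sets N = sets M"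
    using K unfolding cond_kernel_def N_def by auto
  interpret N: prob_space N by fact
  have VN: "V \<in> borel_measurable N" using V_meas measurable_cong_sets[OF sN refl] by blast
  define T where "T d = {\<omega> \<in> space N. V \<omega> \<le> Q d x}" for d
  have Tm: "T d \<in> sets N" for d unfolding T_def using VN by measurable
  have Sind: "\<omega> \<in> space N \<Longrightarrow> Ssel Q V d x \<omega> = indicator (T d) \<omega>" for d \<omega>
    by (simp add: Ssel_def T_def indicator_def)
  have mSe: "mS K Q V d x u = measure N (T d)" for d
  proof -
    have "mS K Q V d x u = (\<integral>\<omega>. indicator (T d) \<omega> \<partial>N)"
      unfolding mS_def N_def[symmetric] by (rule Bochner_Integration.integral_cong) (auto simp: Sind)
    thus ?thesis using Tm by simp
  qed
  have mYe: "mY K Q V Ys d x u = (\<integral>\<omega>. indicator (T d) \<omega> * Ys d \<omega> \<partial>N)" for d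
    unfolding mY_def N_def[symmetric] by (rule Bochner_Integration.integral_cong) (auto simp: Sind)
  have YN: "integrable N (Ys d)" "AE \<omega> in N. Ys d \<omega> \<in> Ysupp" if "d \<in> {0,1}" for d
    using A3_cond A6_cond that unfolding N_def by auto
  have m0: "measure N (T 0) > 0" using wd0 unfolding mSe by (simp add: order_less_le)
  have m1: "measure N (T 1) > 0" using wd1 unfolding mSe by (simp add: order_less_le)
  have bd: "(bdd_below Ysupp \<or> bdd_above Ysupp) \<and> (c = A71 \<longrightarrow> bdd_below Ysupp)
     \<and> (c = A72 \<longrightarrow> bdd_above Ysupp) \<and> (c \<in> {A73a, A73b} \<longrightarrow> bdd_below Ysupp \<and> bdd_above Ysupp)"
    using A7 by (cases c) auto
  show ?thesis
  proof (cases "Q 1 x > Q 0 x")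
    case True
    have sub: "T 0 \<subseteq> T 1" using True unfolding T_def by auto
    define I where "I = (\<integral>\<omega>. indicator (T 0) \<omega> * Ys 1 \<omega> \<partial>N)"
    have DO: "DeltaOO K Q V Ys x u = I / measure N (T 0) - mY K Q V Ys 0 x u / measure N (T 0)"
    proof -
      have i1: "integrable N (\<lambda>\<omega>. indicator (T 0) \<omega> * Ys 1 \<omega>)"
        using integrable_mult_indicator[OF Tm YN(1)[of 1]] by simp
      have i0: "integrable N (\<lambda>\<omega>. indicator (T 0) \<omega> * Ys 0 \<omega>)"
        using integrable_mult_indicator[OF Tm YN(1)[of 0]] by simp
      have "(\<integral>\<omega>. Ssel Q V 0 x \<omega> * Ssel Q V 1 x \<omega> * (Ys 1 \<omega> - Ys 0 \<omega>) \<partial>(K x u))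
          = (\<integral>\<omega>. indicator (T 0) \<omega> * Ys 1 \<omega> - indicator (T 0) \<omega> * Ys 0 \<omega> \<partial>N)"
        unfolding N_def[symmetric] apply (rule Bochner_Integration.integral_cong)
        using sub by (auto simp: Sind indicator_def algebra_simps)
      also have "\<dots> = I - mY K Q V Ys 0 x u" unfolding I_def mYe using i0 i1 by simp
      finally have a: "(\<integral>\<omega>. Ssel Q V 0 x \<omega> * Ssel Q V 1 x \<omega> * (Ys 1 \<omega> - Ys 0 \<omega>) \<partial>(K x u)) = I - mY K Q V Ys 0 x u" .
      have "(\<integral>\<omega>. Ssel Q V 0 x \<omega> * Ssel Q V 1 x \<omega> \<partial>(K x u)) = (\<integral>\<omega>. Ssel Q V 0 x \<omega> \<partial>(K x u))"
        unfolding N_def[symmetric] apply (rule Bochner_Integration.integral_cong)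
        using sub by (auto simp: Sind indicator_def)
      then have b: "(\<integral>\<omega>. Ssel Q V 0 x \<omega> * Ssel Q V 1 x \<omega> \<partial>(K x u)) = measure N (T 0)"
        using mSe[of 0] unfolding mS_def by simp
      show ?thesis unfolding DeltaOO_def a b by (simp add: diff_divide_distrib)
    qed
    have y1: "integrable N (Ys 1)" "AE \<omega> in N. Ys 1 \<omega> \<in> Ysupp" using YN[of 1] by auto
    note B = bnd[OF PN Tm Tm sub y1]
    have L1: "bdd_below Ysupp \<Longrightarrow> Inf Ysupp \<le> I / measure N (T 0)"
      using B(2) m0 unfolding I_def mYe by (simp add: pos_le_divide_eq mult.commute)
    have L2: "bdd_above Ysupp \<Longrightarrow> I / measure N (T 0) \<le> Sup Ysupp"
      using B(4) m0 unfolding I_def mYe by (simp add: pos_divide_le_eq mult.commute)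
    have L3: "bdd_below Ysupp \<Longrightarrow> I / measure N (T 0) \<le> (mY K Q V Ys 1 x u - Inf Ysupp * (measure N (T 1) - measure N (T 0))) / measure N (T 0)"
      using B(1) m0 unfolding I_def mYe by (intro divide_right_mono) auto
    have L4: "bdd_above Ysupp \<Longrightarrow> (mY K Q V Ys 1 x u - Sup Ysupp * (measure N (T 1) - measure N (T 0))) / measure N (T 0) \<le> I / measure N (T 0)"
      using B(3) m0 unfolding I_def mYe by (intro divide_right_mono) auto
    have lo: "Dlo c Ysupp (mY K Q V Ys 1 x u) (mY K Q V Ys 0 x u) (mS K Q V 1 x u) (mS K Q V 0 x u) \<le> DeltaOO K Q V Ys x u"
      using bd L1 L4 unfolding DO mSe by (cases c) auto
    have hi: "DeltaOO K Q V Ys x u \<le> Dhi c Ysupp (mY K Q V Ys 1 x u) (mY K Q V Ys 0 x u) (mS K Q V 1 x u) (mS K Q V 0 x u)"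
      using bd L2 L3 unfolding DO mSe by (cases c) auto
    show ?thesis using lo hi by linarith
  next
    case False
    have sub: "T 1 \<subseteq> T 0" using False unfolding T_def by auto
    define I where "I = (\<integral>\<omega>. indicator (T 1) \<omega> * Ys 0 \<omega> \<partial>N)"
    have DO: "DeltaOO K Q V Ys x u = mY K Q V Ys 1 x u / measure N (T 1) - I / measure N (T 1)"
    proof -
      have i1: "integrable N (\<lambda>\<omega>. indicator (T 1) \<omega> * Ys 1 \<omega>)"
        using integrable_mult_indicator[OF Tm YN(1)[of 1]] by simp
      have i0: "integrable N (\<lambda>\<omega>. indicator (T 1) \<omega> * Ys 0 \<omega>)"
        using integrable_mult_indicator[OF Tm YN(1)[of 0]] by simp
      have "(\<integral>\<omega>. Ssel Q V 0 x \<omega> * Ssel Q V 1 x \<omega> * (Ys 1 \<omega> - Ys 0 \<omega>) \<partial>(K x u))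
          = (\<integral>\<omega>. indicator (T 1) \<omega> * Ys 1 \<omega> - indicator (T 1) \<omega> * Ys 0 \<omega> \<partial>N)"
        unfolding N_def[symmetric] apply (rule Bochner_Integration.integral_cong)
        using sub by (auto simp: Sind indicator_def algebra_simps)
      also have "\<dots> = mY K Q V Ys 1 x u - I" unfolding I_def mYe using i0 i1 by simp
      finally have a: "(\<integral>\<omega>. Ssel Q V 0 x \<omega> * Ssel Q V 1 x \<omega> * (Ys 1 \<omega> - Ys 0 \<omega>) \<partial>(K x u)) = mY K Q V Ys 1 x u - I" .
      have "(\<integral>\<omega>. Ssel Q V 0 x \<omega> * Ssel Q V 1 x \<omega> \<partial>(K x u)) = (\<integral>\<omega>. Ssel Q V 1 x \<omega> \<partial>(K x u))"
        unfolding N_def[symmetric] apply (rule Bochner_Integration.integral_cong)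
        using sub by (auto simp: Sind indicator_def)
      then have b: "(\<integral>\<omega>. Ssel Q V 0 x \<omega> * Ssel Q V 1 x \<omega> \<partial>(K x u)) = measure N (T 1)"
        using mSe[of 1] unfolding mS_def by simp
      show ?thesis unfolding DeltaOO_def a b by (simp add: diff_divide_distrib)
    qed
    have y1: "integrable N (Ys 0)" "AE \<omega> in N. Ys 0 \<omega> \<in> Ysupp" using YN[of 0] by auto
    note B = bnd[OF PN Tm Tm sub y1]
    have L1: "bdd_below Ysupp \<Longrightarrow> Inf Ysupp \<le> I / measure N (T 1)"
      using B(2) m1 unfolding I_def mYe by (simp add: pos_le_divide_eq mult.commute)
    have L2: "bdd_above Ysupp \<Longrightarrow> I / measure N (T 1) \<le> Sup Ysupp"
      using B(4) m1 unfolding I_def mYe by (simp add: pos_divide_le_eq mult.commute)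
    have L3: "bdd_below Ysupp \<Longrightarrow> I / measure N (T 1) \<le> (mY K Q V Ys 0 x u - Inf Ysupp * (measure N (T 0) - measure N (T 1))) / measure N (T 1)"
      using B(1) m1 unfolding I_def mYe by (intro divide_right_mono) auto
    have L4: "bdd_above Ysupp \<Longrightarrow> (mY K Q V Ys 0 x u - Sup Ysupp * (measure N (T 0) - measure N (T 1))) / measure N (T 1) \<le> I / measure N (T 1)"
      using B(3) m1 unfolding I_def mYe by (intro divide_right_mono) auto
    have lo: "Llo c Ysupp (mY K Q V Ys 1 x u) (mY K Q V Ys 0 x u) (mS K Q V 1 x u) (mS K Q V 0 x u) \<le> DeltaOO K Q V Ys x u"
      using bd L2 L3 unfolding DO mSe by (cases c) auto
    have hi: "DeltaOO K Q V Ys x u \<le> Lhi c Ysupp (mY K Q V Ys 1 x u) (mY K Q V Ys 0 x u) (mS K Q V 1 x u) (mS K Q V 0 x u)"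
      using bd L1 L4 unfolding DO mSe by (cases c) auto
    show ?thesis using lo hi by linarith
  qed
qed

end
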